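(* Let $\mathbb{G}$ be a stratified group. Then $\mathbb{R}$ factorizes $\mathbb{G}$; that is: $\mathbb{R}$ is an h-quotient of $\mathbb{G}$ and every normal homogeneous subgroup $N$ of $\mathbb{G}$ with $\mathbb{G}/N$ h-isomorphic to $\mathbb{R}$ has a complementary homogeneous subgroup; and $\mathbb{R}$ h-embeds into $\mathbb{G}$ and every homogeneous subgroup $H$ of $\mathbb{G}$ h-isomorphic to $\mathbb{R}$ has a complementary normal homogeneous subgroup.
   Context: Graded group: connected simply connected real Lie group with Lie algebra $V_1\oplus\cdots\oplus V_\iota$, $[V_i,V_j]\subset V_{i+j}$; stratified if $[V_i,V_j]=V_{i+j}$; dilations act by $r^i$ on $V_i$. $\mathbb{R}^k$ is the graded group with single layer and dilations $v\mapsto rv$. h-homomorphism: group homomorphism commuting with dilations; h-isomorphism: invertible h-homomorphism. Homogeneous subgroup: closed connected simply connected Lie subgroup invariant under dilations. $\mathbb{M}$ is an h-quotient of $\mathbb{G}$ if $\mathbb{G}/N$ is h-isomorphic to $\mathbb{M}$ for some normal homogeneous subgroup $N$; $\mathbb{M}$ h-embeds into $\mathbb{G}$ if some homogeneous subgroup of $\mathbb{G}$ is h-isomorphic to $\mathbb{M}$. Homogeneous subgroups $A,B$ are complementary if $AB=\mathbb{G}$ and $A\cap B=\{e\}$. *)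

theory Defs
  imports "HOL-Analysis.Analysis"
begin

(* A graded group G is modelled in exponential coordinates: the underlying
   space is its Lie algebra g (a finite-dimensional real vector space, DIM >= 1),
   with Lie bracket br, layers V 1, ..., V s (V i = {0} for i = 0 or i > s),
   group product given by the Baker-Campbell-Hausdorff-Dynkin series
   (finite, because g is nilpotent of step s), identity 0, inverse x |-> -x. *)

definition graded_lie_algebra ::
  "('g::euclidean_space \<Rightarrow> 'g \<Rightarrow> 'g) \<Rightarrow> (nat \<Rightarrow> 'g set) \<Rightarrow> nat \<Rightarrow> bool" where
  "graded_lie_algebra br V s \<longleftrightarrow>
     bilinear br \<and>
     (\<forall>x. br x x = 0) \<and>
     (\<forall>x y z. br x (br y z) + br y (br z x) + br z (br x y) = 0) \<and>
     (\<forall>i. subspace (V i)) \<and>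
     (\<forall>i. (i = 0 \<or> s < i) \<longrightarrow> V i = {0}) \<and>
     span (\<Union>i\<in>{1..s}. V i) = UNIV \<and>
     (\<forall>v. (\<forall>i. v i \<in> V i) \<and> (\<Sum>i\<in>{1..s}. v i) = 0 \<longrightarrow> (\<forall>i\<in>{1..s}. v i = 0)) \<and>
     (\<forall>i j x y. x \<in> V i \<and> y \<in> V j \<longrightarrow> br x y \<in> V (i + j))"

definition stratified_lie_algebra ::
  "('g::euclidean_space \<Rightarrow> 'g \<Rightarrow> 'g) \<Rightarrow> (nat \<Rightarrow> 'g set) \<Rightarrow> nat \<Rightarrow> bool" where
  "stratified_lie_algebra br V s \<longleftrightarrow>
     graded_lie_algebra br V s \<and>
     (\<forall>i j. 1 \<le> i \<longrightarrow> 1 \<le> j \<longrightarrow>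
        span {br x y | x y. x \<in> V i \<and> y \<in> V j} = V (i + j))"

fun nbr :: "('g \<Rightarrow> 'g \<Rightarrow> 'g) \<Rightarrow> 'g list \<Rightarrow> 'g::real_vector" where
  "nbr br [] = 0"
| "nbr br [a] = a"
| "nbr br (a # c # w) = br a (nbr br (c # w))"

text \<open>Dynkin's form of the BCH series, truncated at the step s
  (all omitted terms are brackets of length > s, hence vanish).\<close>
definition bch :: "('g \<Rightarrow> 'g \<Rightarrow> 'g) \<Rightarrow> nat \<Rightarrow> 'g \<Rightarrow> 'g \<Rightarrow> 'g::real_vector" where
  "bch br s x y =
     (\<Sum>n\<in>{1..s}. \<Sum>ps\<in>{ps. length ps = n \<and> set ps \<subseteq> {0..s} \<times> {0..s}
                               \<and> (\<forall>p\<in>set ps. 0 < fst p + snd p)}.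
        (((-1) ^ (n - 1) / real n)
          / (real (sum_list (map (\<lambda>(r,q). r + q) ps))
             * prod_list (map (\<lambda>(r,q). fact r * fact q) ps)))
        *\<^sub>R nbr br (concat (map (\<lambda>(r,q). replicate r x @ replicate q y) ps)))"

definition dil :: "(nat \<Rightarrow> 'g set) \<Rightarrow> nat \<Rightarrow> real \<Rightarrow> 'g \<Rightarrow> 'g::real_vector" where
  "dil V s r x = (THE y. \<exists>v. (\<forall>i. v i \<in> V i) \<and> x = (\<Sum>i\<in>{1..s}. v i)
                              \<and> y = (\<Sum>i\<in>{1..s}. (r ^ i) *\<^sub>R v i))"

text \<open>Homogeneous subgroup: closed connected simply connected (Lie) subgroup,
  invariant under dilations. (Closed subgroups are embedded Lie subgroups.)\<close>
definition hom_subgroup ::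
  "('g::euclidean_space \<Rightarrow> 'g \<Rightarrow> 'g) \<Rightarrow> (nat \<Rightarrow> 'g set) \<Rightarrow> nat \<Rightarrow> 'g set \<Rightarrow> bool" where
  "hom_subgroup br V s H \<longleftrightarrow>
     0 \<in> H \<and> (\<forall>x\<in>H. \<forall>y\<in>H. bch br s x y \<in> H) \<and> (\<forall>x\<in>H. - x \<in> H) \<and>
     closed H \<and> connected H \<and> simply_connected H \<and>
     (\<forall>r>0. \<forall>x\<in>H. dil V s r x \<in> H)"

definition normal_hom_subgroup ::
  "('g::euclidean_space \<Rightarrow> 'g \<Rightarrow> 'g) \<Rightarrow> (nat \<Rightarrow> 'g set) \<Rightarrow> nat \<Rightarrow> 'g set \<Rightarrow> bool" where
  "normal_hom_subgroup br V s N \<longleftrightarrow>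
     hom_subgroup br V s N \<and> (\<forall>g x. x \<in> N \<longrightarrow> bch br s (bch br s g x) (- g) \<in> N)"

definition h_hom_to_R ::
  "('g::euclidean_space \<Rightarrow> 'g \<Rightarrow> 'g) \<Rightarrow> (nat \<Rightarrow> 'g set) \<Rightarrow> nat \<Rightarrow> ('g \<Rightarrow> real) \<Rightarrow> bool" where
  "h_hom_to_R br V s \<phi> \<longleftrightarrow>
     continuous_on UNIV \<phi> \<and> (\<forall>x y. \<phi> (bch br s x y) = \<phi> x + \<phi> y) \<and>
     (\<forall>r>0. \<forall>x. \<phi> (dil V s r x) = r * \<phi> x)"

text \<open>G/N is h-isomorphic to R  (via the first isomorphism theorem:
  there is a surjective h-homomorphism G -> R with kernel N).\<close>
definition quotient_h_iso_R ::
  "('g::euclidean_space \<Rightarrow> 'g \<Rightarrow> 'g) \<Rightarrow> (nat \<Rightarrow> 'g set) \<Rightarrow> nat \<Rightarrow> 'g set \<Rightarrow> bool" where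
  "quotient_h_iso_R br V s N \<longleftrightarrow>
     (\<exists>\<phi>. h_hom_to_R br V s \<phi> \<and> surj \<phi> \<and> {x. \<phi> x = 0} = N)"

definition subgroup_h_iso_R ::
  "('g::euclidean_space \<Rightarrow> 'g \<Rightarrow> 'g) \<Rightarrow> (nat \<Rightarrow> 'g set) \<Rightarrow> nat \<Rightarrow> 'g set \<Rightarrow> bool" where
  "subgroup_h_iso_R br V s H \<longleftrightarrow>
     (\<exists>\<psi> :: real \<Rightarrow> 'g. bij_betw \<psi> UNIV H \<and>
        continuous_on UNIV \<psi> \<and> continuous_on H (inv_into UNIV \<psi>) \<and>
        (\<forall>a b. \<psi> (a + b) = bch br s (\<psi> a) (\<psi> b)) \<and>
        (\<forall>r>0. \<forall>a. \<psi> (r * a) = dil V s r (\<psi> a)))"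

definition complementary ::
  "('g::euclidean_space \<Rightarrow> 'g \<Rightarrow> 'g) \<Rightarrow> nat \<Rightarrow> 'g set \<Rightarrow> 'g set \<Rightarrow> bool" where
  "complementary br s A B \<longleftrightarrow>
     (\<lambda>(a, b). bch br s a b) ` (A \<times> B) = UNIV \<and> A \<inter> B = {0}"

end

theory Submission
  imports Defs
begin

locale GL =
  fixes br :: "'g::euclidean_space \<Rightarrow> 'g \<Rightarrow> 'g" and V :: "nat \<Rightarrow> 'g set" and s :: nat
  assumes gl: "graded_lie_algebra br V s"
begin

lemmas glD = gl[unfolded graded_lie_algebra_def]
lemma bil: "bilinear br" using glD by (elim conjE) assumption
lemma brxx: "br x x = 0"
proof - have "\<forall>x. br x x = 0" using glD by (elim conjE) assumption then show ?thesis by blast qed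
lemma subV: "subspace (V i)"
proof - have "\<forall>i. subspace (V i)" using glD by (elim conjE) assumption then show ?thesis by blast qed
lemma V0: "i = 0 \<or> s < i \<Longrightarrow> V i = {0}"
proof - have "\<forall>i. (i = 0 \<or> s < i) \<longrightarrow> V i = {0}" using glD by (elim conjE) assumption
  then show "i = 0 \<or> s < i \<Longrightarrow> V i = {0}" by blast qed
lemma spanV: "span (\<Union>i\<in>{1..s}. V i) = UNIV" using glD by (elim conjE) assumption
lemma uniqV: "(\<forall>i. v i \<in> V i) \<Longrightarrow> (\<Sum>i\<in>{1..s}. v i) = 0 \<Longrightarrow> i \<in> {1..s} \<Longrightarrow> v i = 0"
proof - have "\<forall>v. (\<forall>i. v i \<in> V i) \<and> (\<Sum>i\<in>{1..s}. v i) = 0 \<longrightarrow> (\<forall>i\<in>{1..s}. v i = 0)"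
    using glD by (elim conjE) assumption
  then show "(\<forall>i. v i \<in> V i) \<Longrightarrow> (\<Sum>i\<in>{1..s}. v i) = 0 \<Longrightarrow> i \<in> {1..s} \<Longrightarrow> v i = 0" by blast qed
lemma brV: "x \<in> V i \<Longrightarrow> y \<in> V j \<Longrightarrow> br x y \<in> V (i + j)"
proof - have "\<forall>i j x y. x \<in> V i \<and> y \<in> V j \<longrightarrow> br x y \<in> V (i + j)" using glD by (elim conjE) assumption
  then show "x \<in> V i \<Longrightarrow> y \<in> V j \<Longrightarrow> br x y \<in> V (i + j)" by blast qed

lemma s_pos: "1 \<le> s"
proof (rule ccontr)
  assume "\<not> 1 \<le> s"
  then have "s = 0" by simp
  then have U: "(UNIV::'g set) = {0}" using spanV by simp
  obtain b :: 'g where "b \<in> Basis" using nonempty_Basis by blast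
  then have b: "b \<noteq> 0" using zero_not_in_Basis by metis
  have "b \<in> {0}" by (subst U[symmetric]) simp
  then show False using b by simp
qed

definition W :: "nat \<Rightarrow> 'g set" where "W k = span (\<Union>j\<in>{k..}. V j)"

lemma subW: "subspace (W k)" unfolding W_def by simp

lemma W1: "W 1 = UNIV"
proof -
  have "(\<Union>i\<in>{1..s}. V i) \<subseteq> (\<Union>j\<in>{1..}. V j)" by auto
  then have "span (\<Union>i\<in>{1..s}. V i) \<subseteq> W 1" unfolding W_def by (rule span_mono)
  then have "UNIV \<subseteq> W 1" using spanV by simp
  then show ?thesis by auto
qed

lemma Wtop: "W (Suc s) = {0}"
proof -
  have "(\<Union>j\<in>{Suc s..}. V j) \<subseteq> {0}" using V0 by auto
  then have "W (Suc s) \<subseteq> span {0}" unfolding W_def by (meson span_mono)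
  then have "W (Suc s) \<subseteq> {0}" by simp
  moreover have "0 \<in> W (Suc s)" unfolding W_def by (rule span_zero)
  ultimately show ?thesis by blast
qed

lemma Wmono: "k \<le> m \<Longrightarrow> W m \<subseteq> W k"
  unfolding W_def by (rule span_mono, rule UN_mono) auto

lemma VW: "k \<le> j \<Longrightarrow> V j \<subseteq> W k"
proof -
  assume "k \<le> j"
  then have "V j \<subseteq> (\<Union>i\<in>{k..}. V i)" by (intro UN_upper) simp
  then show ?thesis unfolding W_def using span_superset by (rule order.trans)
qed

lemma brW: assumes "x \<in> W i" "y \<in> W j" shows "br x y \<in> W (i + j)"
proof -
  have lin1: "linear (\<lambda>x. br x y)" for y using bil unfolding bilinear_def by blast
  have lin2: "linear (\<lambda>y. br x y)" for x using bil unfolding bilinear_def by blast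
  have gen: "br a b \<in> W (i + j)" if "a \<in> V p" "p \<ge> i" "b \<in> V q" "q \<ge> j" for a b p q
    using brV[OF that(1,3)] VW[of "i+j" "p+q"] that by auto
  have step1: "br a y \<in> W (i + j)" if "a \<in> V p" "p \<ge> i" for a p
  proof -
    have "y \<in> {b. br a b \<in> W (i+j)}"
    proof (rule span_subspace_induct[of y "\<Union>q\<in>{j..}. V q"])
      show "y \<in> span (\<Union>q\<in>{j..}. V q)" using assms(2) unfolding W_def .
      show "subspace {b. br a b \<in> W (i + j)}"
        using linear_subspace_vimage[OF lin2 subW] by (simp add: vimage_def)
      show "b \<in> {b. br a b \<in> W (i + j)}" if "b \<in> (\<Union>q\<in>{j..}. V q)" for b
        using that gen[OF \<open>a \<in> V p\<close> \<open>p \<ge> i\<close>] by auto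
    qed
    then show ?thesis by simp
  qed
  have "x \<in> {a. br a y \<in> W (i+j)}"
  proof (rule span_subspace_induct[of x "\<Union>p\<in>{i..}. V p"])
    show "x \<in> span (\<Union>p\<in>{i..}. V p)" using assms(1) unfolding W_def .
    show "subspace {a. br a y \<in> W (i + j)}"
      using linear_subspace_vimage[OF lin1 subW] by (simp add: vimage_def)
    show "a \<in> {a. br a y \<in> W (i + j)}" if "a \<in> (\<Union>p\<in>{i..}. V p)" for a
      using that step1 by auto
  qed
  then show ?thesis by simp
qed

lemma nbr_cons2: "t \<noteq> [] \<Longrightarrow> nbr br (a # t) = br a (nbr br t)"
  by (cases t) auto

lemma nbr_col: "set as \<subseteq> range (\<lambda>c. c *\<^sub>R v) \<Longrightarrow>
   nbr br as \<in> range (\<lambda>c. c *\<^sub>R v) \<and> (2 \<le> length as \<longrightarrow> nbr br as = 0)"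
proof (induction as)
  case Nil then show ?case by (auto intro: range_eqI[of _ _ 0])
next
  case (Cons a t)
  show ?case
  proof (cases "t = []")
    case True then show ?thesis using Cons by auto
  next
    case False
    from Cons obtain c where c: "a = c *\<^sub>R v" by auto
    from Cons obtain d where d: "nbr br t = d *\<^sub>R v" by auto
    have "nbr br (a # t) = 0"
      using False c d by (simp add: nbr_cons2 bilinear_lmul[OF bil] bilinear_rmul[OF bil] brxx)
    then show ?thesis by (auto intro: range_eqI[of _ _ 0])
  qed
qed

lemma nbr_W: "list_all2 (\<lambda>a b. a - b \<in> W k) as bs \<Longrightarrow> as \<noteq> [] \<Longrightarrow>
   nbr br as - nbr br bs \<in> W k \<and> (2 \<le> length as \<longrightarrow> nbr br as - nbr br bs \<in> W (Suc k))"
proof (induction as arbitrary: bs)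
  case Nil then show ?case by simp
next
  case (Cons a t)
  from Cons.prems obtain b bt where bs: "bs = b # bt" and ab: "a - b \<in> W k"
    and rel: "list_all2 (\<lambda>a b. a - b \<in> W k) t bt"
    by (auto simp: list_all2_Cons1)
  show ?case
  proof (cases "t = []")
    case True then show ?thesis using bs ab rel by auto
  next
    case False
    then have bt: "bt \<noteq> []" using rel list_all2_lengthD by fastforce
    have IH: "nbr br t - nbr br bt \<in> W k" using Cons.IH[OF rel False] by blast
    have eq: "nbr br (a # t) - nbr br bs = br (a - b) (nbr br t) + br b (nbr br t - nbr br bt)"
      using False bt bs by (simp add: nbr_cons2 bilinear_lsub[OF bil] bilinear_rsub[OF bil])
    have "br (a - b) (nbr br t) \<in> W (k + 1)" using brW[OF ab, of "nbr br t" 1] W1 by auto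
    moreover have "br b (nbr br t - nbr br bt) \<in> W (1 + k)" using brW[OF _ IH, of b 1] W1 by auto
    ultimately have S: "nbr br (a # t) - nbr br bs \<in> W (Suc k)"
      using eq subW[of "Suc k"] by (simp add: subspace_add)
    then show ?thesis using Wmono[of k "Suc k"] by auto
  qed
qed

definition Sset :: "nat \<Rightarrow> (nat \<times> nat) list set" where
  "Sset n = {ps. length ps = n \<and> set ps \<subseteq> {0..s} \<times> {0..s} \<and> (\<forall>p\<in>set ps. 0 < fst p + snd p)}"
definition wrd :: "'g \<Rightarrow> 'g \<Rightarrow> (nat \<times> nat) list \<Rightarrow> 'g list" where
  "wrd x y ps = concat (map (\<lambda>(r,q). replicate r x @ replicate q y) ps)"
definition cf :: "nat \<Rightarrow> (nat \<times> nat) list \<Rightarrow> real" where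
  "cf n ps = ((-1) ^ (n - 1) / real n)
          / (real (sum_list (map (\<lambda>(r,q). r + q) ps))
             * prod_list (map (\<lambda>(r,q). fact r * fact q) ps))"
definition Rst :: "'g \<Rightarrow> 'g \<Rightarrow> 'g" where
  "Rst x y = (\<Sum>n\<in>{1..s}. \<Sum>ps\<in>Sset n.
     (if 2 \<le> length (wrd x y ps) then cf n ps *\<^sub>R nbr br (wrd x y ps) else 0))"

lemma bch_eq: "bch br s x y = (\<Sum>n\<in>{1..s}. \<Sum>ps\<in>Sset n. cf n ps *\<^sub>R nbr br (wrd x y ps))"
  unfolding bch_def Sset_def wrd_def cf_def by simp

lemma len_wrd: "length (wrd x y ps) = sum_list (map (\<lambda>(r,q). r + q) ps)"
  by (induction ps) (auto simp: wrd_def)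

lemma len_le: "(\<forall>p\<in>set ps. 0 < fst p + snd p) \<Longrightarrow> length ps \<le> sum_list (map (\<lambda>(r,q). r + q) ps)"
  by (induction ps) auto

lemma fin_Sset: "finite (Sset n)"
proof -
  have "Sset n \<subseteq> {ps. set ps \<subseteq> {0..s} \<times> {0..s} \<and> length ps = n}" unfolding Sset_def by auto
  then show ?thesis using finite_lists_length_eq[of "{0..s} \<times> {0..s}" n] finite_subset by auto
qed

lemma S1: "{ps \<in> Sset 1. \<not> 2 \<le> length (wrd x y ps)} = {[(1,0)], [(0,1)]}"
proof -
  have A: "ps \<in> {[(1,0)], [(0,1)]}" if "ps \<in> Sset 1" "\<not> 2 \<le> length (wrd x y ps)" for ps
  proof -
    from that(1) have l1: "length ps = 1" and pos: "\<forall>p\<in>set ps. 0 < fst p + snd p"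
      unfolding Sset_def by auto
    from l1 obtain p where ps: "ps = [p]" by (cases ps) auto
    obtain r q where p: "p = (r, q)" by fastforce
    have "0 < r + q" using pos ps p by simp
    moreover have "r + q < 2" using that(2) ps p unfolding len_wrd by simp
    ultimately have "(r = 1 \<and> q = 0) \<or> (r = 0 \<and> q = 1)" by arith
    then show ?thesis using ps p by auto
  qed
  have B: "[(1,0)] \<in> Sset 1" "[(0,1)] \<in> Sset 1" using s_pos unfolding Sset_def by auto
  have C: "\<not> 2 \<le> length (wrd x y [(1,0)])" "\<not> 2 \<le> length (wrd x y [(0,1)])"
    by (simp_all add: wrd_def)
  show ?thesis
  proof (intro equalityI subsetI)
    fix ps assume "ps \<in> {ps \<in> Sset 1. \<not> 2 \<le> length (wrd x y ps)}"
    then show "ps \<in> {[(1,0)], [(0,1)]}" using A by blast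
  next
    fix ps assume "ps \<in> {[(1::nat,0::nat)], [(0,1)]}"
    then have "ps = [(1,0)] \<or> ps = [(0,1)]" by blast
    then show "ps \<in> {ps \<in> Sset 1. \<not> 2 \<le> length (wrd x y ps)}"
    proof
      assume "ps = [(1,0)]" then show ?thesis using B C by simp
    next
      assume "ps = [(0,1)]" then show ?thesis using B C by simp
    qed
  qed
qed

lemma bch_split: "bch br s x y = x + y + Rst x y"
proof -
  define T where "T n ps = cf n ps *\<^sub>R nbr br (wrd x y ps)" for n ps
  define L where "L ps = length (wrd x y ps)" for ps
  have "bch br s x y = (\<Sum>n\<in>{1..s}. \<Sum>ps\<in>Sset n. (if 2 \<le> L ps then T n ps else 0)
      + (if 2 \<le> L ps then 0 else T n ps))"
    unfolding bch_eq T_def[symmetric] by (intro sum.cong refl) simp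
  also have "\<dots> = Rst x y + (\<Sum>n\<in>{1..s}. \<Sum>ps\<in>Sset n. (if 2 \<le> L ps then 0 else T n ps))"
    unfolding Rst_def T_def L_def by (simp add: sum.distrib)
  also have "(\<Sum>n\<in>{1..s}. \<Sum>ps\<in>Sset n. (if 2 \<le> L ps then 0 else T n ps)) = x + y"
  proof -
    have "(\<Sum>ps\<in>Sset n. (if 2 \<le> L ps then 0 else T n ps)) = (if n = 1 then x + y else 0)"
      if "n \<in> {1..s}" for n
    proof (cases "n = 1")
      case True
      have "(\<Sum>ps\<in>Sset n. (if 2 \<le> L ps then 0 else T n ps)) =
            (\<Sum>ps\<in>{ps \<in> Sset n. \<not> 2 \<le> L ps}. T n ps)"
        by (subst sum.inter_filter[OF fin_Sset]) (rule sum.cong, auto)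
      also have "\<dots> = x + y" unfolding L_def True S1 T_def by (simp add: cf_def wrd_def)
      finally show ?thesis using True by simp
    next
      case False
      with that have n2: "2 \<le> n" by auto
      have "2 \<le> L ps" if "ps \<in> Sset n" for ps
        using that len_le[of ps] n2 unfolding Sset_def L_def len_wrd by auto
      then show ?thesis using False by simp
    qed
    then have "(\<Sum>n\<in>{1..s}. \<Sum>ps\<in>Sset n. (if 2 \<le> L ps then 0 else T n ps))
       = (\<Sum>n\<in>{1..s}. (if n = 1 then x + y else 0))" by (rule sum.cong[OF refl])
    also have "\<dots> = x + y" using s_pos by (simp add: sum.delta)
    finally show ?thesis .
  qed
  finally show ?thesis by (simp add: algebra_simps)
qed

lemma W_zero: "0 \<in> W k" by (rule subspace_0[OF subW])
lemma W_add: "x \<in> W k \<Longrightarrow> y \<in> W k \<Longrightarrow> x + y \<in> W k" by (rule subspace_add[OF subW])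
lemma W_diff: "x \<in> W k \<Longrightarrow> y \<in> W k \<Longrightarrow> x - y \<in> W k" by (rule subspace_diff[OF subW])
lemma W_neg: "x \<in> W k \<Longrightarrow> - x \<in> W k" by (rule subspace_neg[OF subW])
lemma W_scale: "x \<in> W k \<Longrightarrow> c *\<^sub>R x \<in> W k" by (rule subspace_scale[OF subW])
lemma W_sum: "(\<And>i. i \<in> A \<Longrightarrow> f i \<in> W k) \<Longrightarrow> sum f A \<in> W k" by (rule subspace_sum[OF subW])

lemma la2_rep: "P a b \<Longrightarrow> list_all2 P (replicate n a) (replicate n b)"
  by (induction n) auto

lemma wrd_rel: "P x x' \<Longrightarrow> P y y' \<Longrightarrow> list_all2 P (wrd x y ps) (wrd x' y' ps)"
proof (induction ps)
  case Nil then show ?case by (simp add: wrd_def)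
next
  case (Cons p ps)
  obtain r q where p: "p = (r, q)" by fastforce
  have r: "list_all2 P (replicate r x) (replicate r x')" by (rule la2_rep) (rule Cons.prems)
  have q: "list_all2 P (replicate q y) (replicate q y')" by (rule la2_rep) (rule Cons.prems)
  have "list_all2 P (replicate r x @ replicate q y @ wrd x y ps) (replicate r x' @ replicate q y' @ wrd x' y' ps)"
    by (intro list_all2_appendI r q Cons.IH Cons.prems)
  then show ?case using p by (simp add: wrd_def)
qed

lemma set_wrd: "set (wrd x y ps) \<subseteq> {x, y}"
proof (induction ps)
  case Nil show ?case by (simp add: wrd_def)
next
  case (Cons p ps)
  obtain r q where p: "p = (r, q)" by fastforce
  have "wrd x y (p # ps) = replicate r x @ replicate q y @ wrd x y ps" using p by (simp add: wrd_def)
  moreover have "set (replicate r x) \<subseteq> {x, y}" "set (replicate q y) \<subseteq> {x, y}" by auto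
  ultimately show ?case using Cons.IH by auto
qed

lemma Rst_diff: assumes "x - x' \<in> W k" "y - y' \<in> W k"
  shows "Rst x y - Rst x' y' \<in> W (Suc k)"
proof -
  have "Rst x y - Rst x' y' = (\<Sum>n\<in>{1..s}. \<Sum>ps\<in>Sset n.
     (if 2 \<le> length (wrd x y ps) then cf n ps *\<^sub>R (nbr br (wrd x y ps) - nbr br (wrd x' y' ps)) else 0))"
    unfolding Rst_def sum_subtractf[symmetric]
    by (intro sum.cong refl) (simp add: len_wrd scaleR_diff_right)
  also have "\<dots> \<in> W (Suc k)"
  proof (intro W_sum)
    fix n ps
    have rel: "list_all2 (\<lambda>a b. a - b \<in> W k) (wrd x y ps) (wrd x' y' ps)"
      using assms by (rule wrd_rel)
    show "(if 2 \<le> length (wrd x y ps) then cf n ps *\<^sub>R (nbr br (wrd x y ps) - nbr br (wrd x' y' ps)) else 0)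
       \<in> W (Suc k)"
    proof (cases "2 \<le> length (wrd x y ps)")
      case True
      then have "wrd x y ps \<noteq> []" by auto
      then show ?thesis using nbr_W[OF rel] True by (simp add: W_scale)
    qed (simp add: W_zero)
  qed
  finally show ?thesis .
qed

lemma Rst_col: assumes "x \<in> range (\<lambda>c. c *\<^sub>R v)" "y \<in> range (\<lambda>c. c *\<^sub>R v)"
  shows "Rst x y = 0"
proof -
  have "set (wrd x y ps) \<subseteq> range (\<lambda>c. c *\<^sub>R v)" for ps using set_wrd[of x y ps] assms by blast
  then have "2 \<le> length (wrd x y ps) \<Longrightarrow> nbr br (wrd x y ps) = 0" for ps using nbr_col by blast
  then show ?thesis unfolding Rst_def by (simp cong: if_cong)
qed

lemma bch_col: "bch br s (a *\<^sub>R v) (b *\<^sub>R v) = (a + b) *\<^sub>R v"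
proof -
  have "Rst (a *\<^sub>R v) (b *\<^sub>R v) = 0" by (intro Rst_col[of _ v] rangeI)
  then show ?thesis by (simp add: bch_split scaleR_add_left)
qed

lemma bch_double: "bch br s x x = 2 *\<^sub>R x"
  using bch_col[of 1 x 1] by simp

lemma bch00: "bch br s 0 0 = 0"
  using bch_col[of 0 0 0] by simp

lemma Rst_W2: "Rst x y \<in> W 2"
proof -
  have "Rst x y - Rst 0 0 \<in> W (Suc 1)" by (rule Rst_diff) (simp_all add: W1[unfolded One_nat_def])
  moreover have "Rst 0 0 = 0" using Rst_col[of 0 0 0] by simp
  ultimately show ?thesis by (simp add: numeral_2_eq_2)
qed

lemma right_trans: "\<exists>n. bch br s n w = g"
proof -
  have "\<exists>n. g - bch br s n w \<in> W k" if "1 \<le> k" for k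
    using that
  proof (induction k rule: dec_induct)
    case base then show ?case using W1 by auto
  next
    case (step k)
    then obtain n where d: "g - bch br s n w \<in> W k" by blast
    define d where "d = g - bch br s n w"
    have "Rst (n + d) w - Rst n w \<in> W (Suc k)"
      by (rule Rst_diff) (use d d_def W_zero in auto)
    moreover have "g - bch br s (n + d) w = - (Rst (n + d) w - Rst n w)"
      unfolding d_def bch_split by (simp add: algebra_simps)
    ultimately show ?case by (metis W_neg)
  qed
  from this[of "Suc s"] obtain n where "g - bch br s n w \<in> W (Suc s)" by auto
  then show ?thesis using Wtop by auto
qed

lemma left_trans: "\<exists>n. bch br s w n = g"
proof -
  have "\<exists>n. g - bch br s w n \<in> W k" if "1 \<le> k" for k
    using that
  proof (induction k rule: dec_induct)
    case base then show ?case using W1 by auto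
  next
    case (step k)
    then obtain n where d: "g - bch br s w n \<in> W k" by blast
    define d where "d = g - bch br s w n"
    have "Rst w (n + d) - Rst w n \<in> W (Suc k)"
      by (rule Rst_diff) (use d d_def W_zero in auto)
    moreover have "g - bch br s w (n + d) = - (Rst w (n + d) - Rst w n)"
      unfolding d_def bch_split by (simp add: algebra_simps)
    ultimately show ?case by (metis W_neg)
  qed
  from this[of "Suc s"] obtain n where "g - bch br s w n \<in> W (Suc s)" by auto
  then show ?thesis using Wtop by auto
qed

lemma dec_uniq: assumes "\<forall>i. v i \<in> V i" "\<forall>i. v' i \<in> V i" "(\<Sum>i\<in>{1..s}. v i) = (\<Sum>i\<in>{1..s}. v' i)"
  "i \<in> {1..s}" shows "v i = v' i"
proof -
  have a: "\<forall>i. v i - v' i \<in> V i" using assms(1,2) subspace_diff[OF subV] by blast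
  have b: "(\<Sum>i\<in>{1..s}. v i - v' i) = 0" using assms(3) by (simp add: sum_subtractf)
  have "v i - v' i = 0" using uniqV[of "\<lambda>i. v i - v' i" i, OF a b assms(4)] by simp
  then show ?thesis by simp
qed

lemma dil_eq: assumes "\<forall>i. v i \<in> V i" "x = (\<Sum>i\<in>{1..s}. v i)"
  shows "dil V s r x = (\<Sum>i\<in>{1..s}. (r ^ i) *\<^sub>R v i)"
  unfolding dil_def
proof (rule the_equality)
  show "\<exists>v'. (\<forall>i. v' i \<in> V i) \<and> x = (\<Sum>i\<in>{1..s}. v' i) \<and> (\<Sum>i\<in>{1..s}. r ^ i *\<^sub>R v i) = (\<Sum>i\<in>{1..s}. r ^ i *\<^sub>R v' i)"
    using assms by blast
  fix y assume "\<exists>v'. (\<forall>i. v' i \<in> V i) \<and> x = (\<Sum>i\<in>{1..s}. v' i) \<and> y = (\<Sum>i\<in>{1..s}. r ^ i *\<^sub>R v' i)"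
  then obtain v' where v': "\<forall>i. v' i \<in> V i" "x = (\<Sum>i\<in>{1..s}. v' i)" "y = (\<Sum>i\<in>{1..s}. r ^ i *\<^sub>R v' i)"
    by blast
  have "v' i = v i" if "i \<in> {1..s}" for i using dec_uniq[OF v'(1) assms(1) _ that] v'(2) assms(2) by simp
  then show "y = (\<Sum>i\<in>{1..s}. r ^ i *\<^sub>R v i)" using v'(3) by simp
qed

lemma sum_single: assumes "w \<in> V k" shows "(\<Sum>i\<in>{1..s}. if i = k then w else 0) = w"
proof (cases "k \<in> {1..s}")
  case True then show ?thesis by (simp add: sum.delta)
next
  case False
  then have "k = 0 \<or> s < k" by auto
  then have "w = 0" using V0[OF \<open>k = 0 \<or> s < k\<close>] assms by simp
  then show ?thesis by simp
qed

lemma single_in: assumes "w \<in> V k" shows "\<forall>i. (if i = k then w else 0) \<in> V i"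
proof
  fix i show "(if i = k then w else 0) \<in> V i"
    by (cases "i = k") (simp_all add: assms subspace_0[OF subV])
qed

lemma dil_V: assumes "w \<in> V k" shows "dil V s r w = (r ^ k) *\<^sub>R w"
proof -
  have "dil V s r w = (\<Sum>i\<in>{1..s}. (r ^ i) *\<^sub>R (if i = k then w else 0))"
    using dil_eq[OF single_in[OF assms] sum_single[OF assms, symmetric]] .
  also have "\<dots> = (\<Sum>i\<in>{1..s}. if i = k then (r ^ k) *\<^sub>R w else 0)"
    by (rule sum.cong) auto
  also have "\<dots> = (r ^ k) *\<^sub>R w"
    using sum_single[OF subspace_scale[OF subV assms]] .
  finally show ?thesis .
qed

lemma dec_ex: "\<exists>v. (\<forall>i. v i \<in> V i) \<and> x = (\<Sum>i\<in>{1..s}. v i)"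
proof -
  define D where "D = {x. \<exists>v. (\<forall>i. v i \<in> V i) \<and> x = (\<Sum>i\<in>{1..s}. v i)}"
  have "subspace D"
    unfolding subspace_def
  proof (intro conjI ballI allI)
    show "0 \<in> D" unfolding D_def using subV subspace_0 by (intro CollectI exI[of _ "\<lambda>_. 0"]) auto
  next
    fix x y assume "x \<in> D" "y \<in> D"
    then obtain v v' where "\<forall>i. v i \<in> V i" "x = (\<Sum>i\<in>{1..s}. v i)" "\<forall>i. v' i \<in> V i" "y = (\<Sum>i\<in>{1..s}. v' i)"
      unfolding D_def by blast
    then show "x + y \<in> D" unfolding D_def
      by (intro CollectI exI[of _ "\<lambda>i. v i + v' i"]) (auto simp: sum.distrib intro: subspace_add[OF subV])
  next
    fix c and x assume "x \<in> D"
    then obtain v where "\<forall>i. v i \<in> V i" "x = (\<Sum>i\<in>{1..s}. v i)" unfolding D_def by blast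
    then show "c *\<^sub>R x \<in> D" unfolding D_def
      by (intro CollectI exI[of _ "\<lambda>i. c *\<^sub>R v i"]) (auto simp: scaleR_sum_right intro: subspace_scale[OF subV])
  qed
  moreover have "(\<Union>i\<in>{1..s}. V i) \<subseteq> D"
  proof
    fix x assume "x \<in> (\<Union>i\<in>{1..s}. V i)"
    then obtain k where k: "x \<in> V k" by blast
    show "x \<in> D" unfolding D_def
      using single_in[OF k] sum_single[OF k, symmetric]
      by (intro CollectI exI[of _ "\<lambda>i. if i = k then x else 0"] conjI)
  qed
  ultimately have "span (\<Union>i\<in>{1..s}. V i) \<subseteq> D" by (intro span_minimal)
  then show ?thesis using spanV unfolding D_def by auto
qed

definition P1 :: "'g \<Rightarrow> 'g" where
  "P1 x = (SOME v. (\<forall>i. v i \<in> V i) \<and> x = (\<Sum>i\<in>{1..s}. v i)) 1"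

lemma P1_eq: assumes "\<forall>i. v i \<in> V i" "x = (\<Sum>i\<in>{1..s}. v i)" shows "P1 x = v 1"
proof -
  let ?v = "SOME v. (\<forall>i. v i \<in> V i) \<and> x = (\<Sum>i\<in>{1..s}. v i)"
  have "(\<forall>i. ?v i \<in> V i) \<and> x = (\<Sum>i\<in>{1..s}. ?v i)" using someI_ex[OF dec_ex[of x]] .
  then show ?thesis unfolding P1_def using dec_uniq[of ?v v 1] assms s_pos by auto
qed

lemma P1_lin: "linear P1"
proof (rule linearI)
  fix x y
  obtain v where v: "\<forall>i. v i \<in> V i" "x = (\<Sum>i\<in>{1..s}. v i)" using dec_ex by blast
  obtain v' where v': "\<forall>i. v' i \<in> V i" "y = (\<Sum>i\<in>{1..s}. v' i)" using dec_ex by blast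
  have "P1 (x + y) = v 1 + v' 1"
    by (rule P1_eq[of "\<lambda>i. v i + v' i"]) (use v v' in \<open>auto simp: sum.distrib intro: subspace_add[OF subV]\<close>)
  then show "P1 (x + y) = P1 x + P1 y" using P1_eq[OF v] P1_eq[OF v'] by simp
next
  fix c x
  obtain v where v: "\<forall>i. v i \<in> V i" "x = (\<Sum>i\<in>{1..s}. v i)" using dec_ex by blast
  have "P1 (c *\<^sub>R x) = c *\<^sub>R v 1"
    by (rule P1_eq[of "\<lambda>i. c *\<^sub>R v i"]) (use v in \<open>auto simp: scaleR_sum_right intro: subspace_scale[OF subV]\<close>)
  then show "P1 (c *\<^sub>R x) = c *\<^sub>R P1 x" using P1_eq[OF v] by simp
qed

lemma P1_V: assumes "w \<in> V k" shows "P1 w = (if k = 1 then w else 0)"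
  using P1_eq[OF single_in[OF assms] sum_single[OF assms, symmetric]] by simp

lemma P1_W2: assumes "x \<in> W 2" shows "P1 x = 0"
proof -
  have "x \<in> {x. P1 x = 0}"
  proof (rule span_subspace_induct[of x "\<Union>j\<in>{2..}. V j"])
    show "x \<in> span (\<Union>j\<in>{2..}. V j)" using assms unfolding W_def .
    show "subspace {x. P1 x = 0}" by (rule linear_subspace_kernel[OF P1_lin])
    show "y \<in> {x. P1 x = 0}" if "y \<in> (\<Union>j\<in>{2..}. V j)" for y
      using that P1_V by auto
  qed
  then show ?thesis by simp
qed

lemma P1_bch: "P1 (bch br s x y) = P1 x + P1 y"
  using P1_W2[OF Rst_W2] by (simp add: bch_split linear_add[OF P1_lin])

lemma P1_dil: "P1 (dil V s r x) = r *\<^sub>R P1 x"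
proof -
  obtain v where v: "\<forall>i. v i \<in> V i" "x = (\<Sum>i\<in>{1..s}. v i)" using dec_ex by blast
  have "P1 (dil V s r x) = (r ^ 1) *\<^sub>R v 1"
    by (rule P1_eq[of "\<lambda>i. (r ^ i) *\<^sub>R v i"]) (use v dil_eq in \<open>auto intro: subspace_scale[OF subV]\<close>)
  then show ?thesis using P1_eq[OF v] by simp
qed


definition phi :: "'g \<Rightarrow> 'g \<Rightarrow> real" where "phi u x = (P1 x \<bullet> u) / (u \<bullet> u)"

lemma phi_lin: "linear (phi u)"
proof (rule linearI)
  fix x y show "phi u (x + y) = phi u x + phi u y"
    unfolding phi_def by (simp add: linear_add[OF P1_lin] inner_add_left add_divide_distrib)
next
  fix c x show "phi u (c *\<^sub>R x) = c *\<^sub>R phi u x"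
    unfolding phi_def by (simp add: linear_scale[OF P1_lin])
qed

lemma phi_hom: "h_hom_to_R br V s (phi u)"
  unfolding h_hom_to_R_def
proof (intro conjI allI impI)
  show "continuous_on UNIV (phi u)"
    by (rule linear_continuous_on) (use phi_lin linear_conv_bounded_linear in blast)
  fix x y show "phi u (bch br s x y) = phi u x + phi u y"
    unfolding phi_def by (simp add: P1_bch inner_add_left add_divide_distrib)
next
  fix r :: real and x show "phi u (dil V s r x) = r * phi u x"
    unfolding phi_def by (simp add: P1_dil)
qed

lemma phi_u: assumes "u \<in> V 1" "u \<noteq> 0" shows "phi u (c *\<^sub>R u) = c"
proof -
  have "c *\<^sub>R u \<in> V 1" by (rule subspace_scale[OF subV assms(1)])
  then have "P1 (c *\<^sub>R u) = c *\<^sub>R u" using P1_V by simp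
  then show ?thesis unfolding phi_def using assms(2) by simp
qed

lemma ker_normal: assumes h: "h_hom_to_R br V s f" and l: "linear f"
  shows "normal_hom_subgroup br V s {x. f x = 0}"
proof -
  have add: "f (bch br s x y) = f x + f y" for x y using h unfolding h_hom_to_R_def by blast
  have dl: "r > 0 \<Longrightarrow> f (dil V s r x) = r * f x" for r x using h unfolding h_hom_to_R_def by blast
  have sub: "subspace {x. f x = 0}" by (rule linear_subspace_kernel[OF l])
  have cv: "convex {x. f x = 0}" by (rule subspace_imp_convex[OF sub])
  show ?thesis
    unfolding normal_hom_subgroup_def hom_subgroup_def
  proof (intro conjI ballI allI impI)
    show "0 \<in> {x. f x = 0}" by (simp add: linear_0[OF l])
    show "closed {x. f x = 0}" by (rule closed_subspace[OF sub])
    show "connected {x. f x = 0}" by (rule convex_connected[OF cv])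
    show "simply_connected {x. f x = 0}" by (rule convex_imp_simply_connected[OF cv])
  next
    fix x y assume "x \<in> {x. f x = 0}" "y \<in> {x. f x = 0}"
    then show "bch br s x y \<in> {x. f x = 0}" by (simp add: add)
  next
    fix x assume "x \<in> {x. f x = 0}"
    then show "- x \<in> {x. f x = 0}" by (simp add: linear_neg[OF l])
  next
    fix r :: real and x assume "0 < r" "x \<in> {x. f x = 0}"
    then show "dil V s r x \<in> {x. f x = 0}" by (simp add: dl)
  next
    fix g x assume "x \<in> {x. f x = 0}"
    then show "bch br s (bch br s g x) (- g) \<in> {x. f x = 0}" by (simp add: add linear_neg[OF l])
  qed
qed

lemma line_eq: "range (\<lambda>c. c *\<^sub>R u) = span {u}"
  by (simp add: span_singleton)

lemma line_hom: assumes u: "u \<in> V 1" shows "hom_subgroup br V s (range (\<lambda>c. c *\<^sub>R u))"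
proof -
  have sub: "subspace (range (\<lambda>c. c *\<^sub>R u))" unfolding line_eq by simp
  have cv: "convex (range (\<lambda>c. c *\<^sub>R u))" by (rule subspace_imp_convex[OF sub])
  show ?thesis
    unfolding hom_subgroup_def
  proof (intro conjI ballI allI impI)
    show "0 \<in> range (\<lambda>c. c *\<^sub>R u)" by (rule subspace_0[OF sub])
    show "closed (range (\<lambda>c. c *\<^sub>R u))" by (rule closed_subspace[OF sub])
    show "connected (range (\<lambda>c. c *\<^sub>R u))" by (rule convex_connected[OF cv])
    show "simply_connected (range (\<lambda>c. c *\<^sub>R u))" by (rule convex_imp_simply_connected[OF cv])
  next
    fix x y assume "x \<in> range (\<lambda>c. c *\<^sub>R u)" "y \<in> range (\<lambda>c. c *\<^sub>R u)"
    then obtain a b where "x = a *\<^sub>R u" "y = b *\<^sub>R u" by blast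
    then have "bch br s x y = (a + b) *\<^sub>R u" by (simp add: bch_col)
    then show "bch br s x y \<in> range (\<lambda>c. c *\<^sub>R u)" by (metis rangeI)
  next
    fix x assume "x \<in> range (\<lambda>c. c *\<^sub>R u)"
    then show "- x \<in> range (\<lambda>c. c *\<^sub>R u)" by (rule subspace_neg[OF sub])
  next
    fix r :: real and x assume "0 < r" "x \<in> range (\<lambda>c. c *\<^sub>R u)"
    then obtain a where a: "x = a *\<^sub>R u" by blast
    have "a *\<^sub>R u \<in> V 1" by (rule subspace_scale[OF subV u])
    then have "dil V s r x = (r * a) *\<^sub>R u" using a dil_V by simp
    then show "dil V s r x \<in> range (\<lambda>c. c *\<^sub>R u)" by (metis rangeI)
  qed
qed

lemma hom_add: "h_hom_to_R br V s f \<Longrightarrow> f (bch br s x y) = f x + f y"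
  unfolding h_hom_to_R_def by blast
lemma hom_dil: "h_hom_to_R br V s f \<Longrightarrow> r > 0 \<Longrightarrow> f (dil V s r x) = r * f x"
  unfolding h_hom_to_R_def by blast

lemma hom_zero: assumes "h_hom_to_R br V s f" shows "f 0 = 0"
  using hom_add[OF assms, of 0 0] by (simp add: bch00)

lemma hom_double: assumes "h_hom_to_R br V s f" shows "f (2 *\<^sub>R x) = 2 * f x"
  using hom_add[OF assms, of x x] by (simp add: bch_double)

lemma hom_pow2: assumes "h_hom_to_R br V s f" shows "f ((2 ^ k) *\<^sub>R x) = 2 ^ k * f x"
proof (induction k)
  case 0 then show ?case by simp
next
  case (Suc k)
  have "f ((2 ^ Suc k) *\<^sub>R x) = f (2 *\<^sub>R ((2 ^ k) *\<^sub>R x))" by simp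
  also have "\<dots> = 2 * f ((2 ^ k) *\<^sub>R x)" by (rule hom_double[OF assms])
  finally show ?case using Suc by simp
qed

lemma hom_Vk: assumes h: "h_hom_to_R br V s f" and w: "w \<in> V k" and k: "2 \<le> k" shows "f w = 0"
proof -
  have "f (dil V s 2 w) = 2 * f w" using hom_dil[OF h] by simp
  moreover have "dil V s 2 w = (2 ^ k) *\<^sub>R w" using dil_V[OF w] by simp
  ultimately have e: "2 ^ k * f w = 2 * f w" using hom_pow2[OF h] by simp
  have "(2::real) ^ 2 \<le> 2 ^ k" using k by (intro power_increasing) auto
  then have "(2::real) ^ k \<noteq> 2" by simp
  then show ?thesis using e by simp
qed

lemma hom_line: assumes h: "h_hom_to_R br V s f" and v: "v \<in> V 1" shows "f (c *\<^sub>R v) = c * f v"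
proof -
  have pos: "f (c *\<^sub>R v) = c * f v" if "c > 0" for c
  proof -
    have "dil V s c v = c *\<^sub>R v" using dil_V[OF v] by simp
    then show ?thesis using hom_dil[OF h that, of v] by simp
  qed
  show ?thesis
  proof (cases "c > 0")
    case True then show ?thesis by (rule pos)
  next
    case False
    show ?thesis
    proof (cases "c = 0")
      case True then show ?thesis using hom_zero[OF h] by simp
    next
      case False
      with \<open>\<not> c > 0\<close> have "- c > 0" by simp
      have "bch br s (c *\<^sub>R v) ((- c) *\<^sub>R v) = 0" using bch_col[of c v "- c"] by simp
      then have "f (bch br s (c *\<^sub>R v) ((- c) *\<^sub>R v)) = f 0" by simp
      then have "f (c *\<^sub>R v) + f ((- c) *\<^sub>R v) = 0" using hom_add[OF h] hom_zero[OF h] by simp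
      then show ?thesis using pos[OF \<open>- c > 0\<close>] by simp
    qed
  qed
qed

lemma W_split: "W k = span (V k \<union> (\<Union>j\<in>{Suc k..}. V j))"
proof -
  have "{k..} = insert k {Suc k..}" by auto
  then have "(\<Union>j\<in>{k..}. V j) = V k \<union> (\<Union>j\<in>{Suc k..}. V j)" by simp
  then show ?thesis unfolding W_def by simp
qed

lemma DEC: assumes k: "1 \<le> k" and x: "x \<in> W k"
  shows "\<exists>w\<in>V k. \<exists>y\<in>W (Suc k). x = bch br s w y"
proof -
  from x obtain a b where ab: "x = a + b" "a \<in> span (V k)" "b \<in> span (\<Union>j\<in>{Suc k..}. V j)"
    unfolding W_split span_Un by blast
  have "span (V k) \<subseteq> V k" by (rule span_minimal[OF subset_refl subV])
  then have a: "a \<in> V k" using ab(2) by blast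
  have b: "b \<in> W (Suc k)" using ab(3) unfolding W_def .
  obtain y where y: "bch br s a y = x" using left_trans by blast
  have "Rst 0 y = 0" by (rule Rst_col[of _ y]) (auto intro: range_eqI[of _ _ 0] range_eqI[of _ _ 1])
  moreover have "Rst a y - Rst 0 y \<in> W (Suc k)"
    by (rule Rst_diff) (use VW[of k k] a W_zero in auto)
  ultimately have R: "Rst a y \<in> W (Suc k)" by simp
  have "y = b - Rst a y" using y ab(1) unfolding bch_split by (simp add: algebra_simps)
  then have "y \<in> W (Suc k)" using W_diff[OF b R] by simp
  then show ?thesis using a y by blast
qed

lemma hom_V1_nonzero: assumes h: "h_hom_to_R br V s f" and sj: "surj f"
  shows "\<exists>v\<in>V 1. f v \<noteq> 0"
proof (rule ccontr)
  assume "\<not> (\<exists>v\<in>V 1. f v \<noteq> 0)"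
  then have V1z: "\<forall>v\<in>V 1. f v = 0" by blast
  have Vz: "f w = 0" if "1 \<le> k" "w \<in> V k" for k w
  proof (cases "k = 1")
    case True then show ?thesis using V1z that by simp
  next
    case False then show ?thesis using hom_Vk[OF h that(2)] that by simp
  qed
  have "\<forall>x\<in>W (Suc s - m). f x = 0" if "m \<le> s" for m
    using that
  proof (induction m)
    case 0 then show ?case using Wtop hom_zero[OF h] by simp
  next
    case (Suc m)
    define k where "k = s - m"
    have k1: "1 \<le> k" using Suc.prems unfolding k_def by simp
    have eq1: "Suc s - Suc m = k" and eq2: "Suc s - m = Suc k" using Suc.prems unfolding k_def by auto
    have IH: "\<forall>x\<in>W (Suc k). f x = 0" using Suc.IH Suc.prems eq2 by simp
    show ?case unfolding eq1
    proof
      fix x assume "x \<in> W k"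
      then obtain w y where "w \<in> V k" "y \<in> W (Suc k)" "x = bch br s w y" using DEC[OF k1] by blast
      then show "f x = 0" using hom_add[OF h] Vz[OF k1] IH by simp
    qed
  qed
  from this[of s] have "\<forall>x. f x = 0" using W1 by simp
  moreover obtain x where "1 = f x" using surjD[OF sj, of 1] by blast
  ultimately show False by simp
qed

lemma dil2_V1: assumes "dil V s 2 u = 2 *\<^sub>R u" shows "u \<in> V 1"
proof -
  obtain v where v: "\<forall>i. v i \<in> V i" "u = (\<Sum>i\<in>{1..s}. v i)" using dec_ex by blast
  have e: "(\<Sum>i\<in>{1..s}. (2 ^ i) *\<^sub>R v i) = (\<Sum>i\<in>{1..s}. (2::real) *\<^sub>R v i)"
    using assms dil_eq[OF v] v(2) by (simp add: scaleR_sum_right)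
  have z: "v i = (if i = 1 then v 1 else 0)" if "i \<in> {1..s}" for i
  proof (cases "i = 1")
    case False
    have "(2 ^ i) *\<^sub>R v i = (2::real) *\<^sub>R v i"
      by (rule dec_uniq[of "\<lambda>i. (2 ^ i) *\<^sub>R v i" "\<lambda>i. (2::real) *\<^sub>R v i", OF _ _ e that])
         (use v in \<open>auto intro: subspace_scale[OF subV]\<close>)
    moreover have "(2::real) ^ 2 \<le> 2 ^ i" using False that by (intro power_increasing) auto
    ultimately have "((2::real) ^ i - 2) *\<^sub>R v i = 0" "(2::real) ^ i - 2 \<noteq> 0"
      by (simp_all add: scaleR_diff_left)
    then have "v i = 0" by simp
    then show ?thesis using False by simp
  qed simp
  have "u = (\<Sum>i\<in>{1..s}. (if i = 1 then v 1 else 0))" unfolding v(2) by (rule sum.cong[OF refl]) (rule z)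
  also have "\<dots> = v 1" using s_pos by (simp add: sum.delta)
  finally show ?thesis using v(1) by simp
qed


lemma psi_line: assumes "subgroup_h_iso_R br V s H" shows "\<exists>u\<in>V 1. u \<noteq> 0 \<and> H = range (\<lambda>c. c *\<^sub>R u)"
proof -
  obtain \<psi> where bij: "bij_betw \<psi> UNIV H" and add: "\<And>a b. \<psi> (a + b) = bch br s (\<psi> a) (\<psi> b)"
    and dl: "\<And>r a. r > 0 \<Longrightarrow> \<psi> (r * a) = dil V s r (\<psi> a)"
    using assms unfolding subgroup_h_iso_R_def by blast
  have "\<psi> 0 = \<psi> 0 + \<psi> 0" using add[of 0 0] bch_double[of "\<psi> 0"] by (simp add: scaleR_2)
  then have p0: "\<psi> 0 = 0" by simp
  define u where "u = \<psi> 1"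
  define w where "w = \<psi> (-1)"
  have "dil V s 2 u = 2 *\<^sub>R u" using dl[of 2 1] add[of 1 1] bch_double[of u] unfolding u_def
    by (simp add: one_add_one)
  then have u1: "u \<in> V 1" by (rule dil2_V1)
  have "\<psi> (-2) = \<psi> (-1 + -1)" by simp
  then have "dil V s 2 w = 2 *\<^sub>R w" using dl[of 2 "-1"] add[of "-1" "-1"] bch_double[of w] unfolding w_def
    by simp
  then have w1: "w \<in> V 1" by (rule dil2_V1)
  have "bch br s u w = 0" using add[of 1 "-1"] p0 unfolding u_def w_def by simp
  then have "P1 u + P1 w = 0" using P1_bch[of u w] linear_0[OF P1_lin] by simp
  then have wu: "w = - u" using P1_V[OF u1] P1_V[OF w1] by (simp add: add_eq_0_iff)
  have psi: "\<psi> t = t *\<^sub>R u" for t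
  proof -
    consider "t > 0" | "t = 0" | "t < 0" by linarith
    then show ?thesis
    proof cases
      case 1 then show ?thesis using dl[of t 1] dil_V[OF u1, of t] unfolding u_def by simp
    next
      case 2 then show ?thesis using p0 by simp
    next
      case 3
      then have "\<psi> ((- t) * (-1)) = dil V s (- t) w" using dl[of "-t" "-1"] unfolding w_def by simp
      then show ?thesis using dil_V[OF w1, of "-t"] wu by simp
    qed
  qed
  have "inj \<psi>" using bij by (simp add: bij_betw_def)
  then have "u \<noteq> 0" using p0 unfolding u_def by (metis injD zero_neq_one)
  moreover have "H = range (\<lambda>c. c *\<^sub>R u)"
  proof -
    have "H = range \<psi>" using bij by (simp add: bij_betw_def)
    also have "\<psi> = (\<lambda>c. c *\<^sub>R u)" using psi by (rule ext)
    finally show ?thesis .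
  qed
  ultimately show ?thesis using u1 by blast
qed

lemma line_iso: assumes u1: "u \<in> V 1" and u0: "u \<noteq> 0"
  shows "subgroup_h_iso_R br V s (range (\<lambda>c. c *\<^sub>R u))"
  unfolding subgroup_h_iso_R_def
proof (intro exI[of _ "\<lambda>c. c *\<^sub>R u"] conjI allI impI)
  have inj: "inj (\<lambda>c. c *\<^sub>R u)" by (rule injI) (use u0 in simp)
  then show "bij_betw (\<lambda>c. c *\<^sub>R u) UNIV (range (\<lambda>c. c *\<^sub>R u))" by (simp add: bij_betw_def)
  show "continuous_on UNIV (\<lambda>c. c *\<^sub>R u)" by (intro continuous_intros)
  have uu: "u \<bullet> u \<noteq> 0" using u0 by simp
  have eq: "inv_into UNIV (\<lambda>c. c *\<^sub>R u) x = (x \<bullet> u) / (u \<bullet> u)" if "x \<in> range (\<lambda>c. c *\<^sub>R u)" for x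
  proof -
    from that obtain c where c: "x = c *\<^sub>R u" by blast
    have "inv_into UNIV (\<lambda>c. c *\<^sub>R u) x = c" unfolding c by (rule inv_into_f_f[OF inj]) simp
    moreover have "(x \<bullet> u) / (u \<bullet> u) = c" unfolding c using uu by simp
    ultimately show ?thesis by simp
  qed
  have cont: "continuous_on (range (\<lambda>c. c *\<^sub>R u)) (\<lambda>x. (x \<bullet> u) / (u \<bullet> u))"
    by (intro continuous_intros) (use uu in auto)
  show "continuous_on (range (\<lambda>c. c *\<^sub>R u)) (inv_into UNIV (\<lambda>c. c *\<^sub>R u))"
  proof -
    have "continuous_on (range (\<lambda>c. c *\<^sub>R u)) (inv_into UNIV (\<lambda>c. c *\<^sub>R u)) =
          continuous_on (range (\<lambda>c. c *\<^sub>R u)) (\<lambda>x. (x \<bullet> u) / (u \<bullet> u))"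
      by (rule continuous_on_cong[OF refl eq])
    then show ?thesis using cont by simp
  qed
next
  fix a b :: real show "(a + b) *\<^sub>R u = bch br s (a *\<^sub>R u) (b *\<^sub>R u)" by (simp add: bch_col)
next
  fix r a :: real assume "0 < r"
  have "a *\<^sub>R u \<in> V 1" by (rule subspace_scale[OF subV u1])
  then show "(r * a) *\<^sub>R u = dil V s r (a *\<^sub>R u)" using dil_V by simp
qed

lemma V1_ne: assumes st: "stratified_lie_algebra br V s" shows "\<exists>u\<in>V 1. u \<noteq> 0"
proof (rule ccontr)
  assume "\<not> (\<exists>u\<in>V 1. u \<noteq> 0)"
  then have z1: "V 1 \<subseteq> {0}" by blast
  have strat: "span {br x y | x y. x \<in> V i \<and> y \<in> V j} = V (i + j)" if "1 \<le> i" "1 \<le> j" for i j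
    using st that unfolding stratified_lie_algebra_def by blast
  have zj: "V (Suc j) \<subseteq> {0}" for j
  proof (induction j)
    case 0 then show ?case using z1 by simp
  next
    case (Suc j)
    have "{br x y | x y. x \<in> V 1 \<and> y \<in> V (Suc j)} \<subseteq> {0}"
      using z1 bilinear_lzero[OF bil] by auto
    then have "span {br x y | x y. x \<in> V 1 \<and> y \<in> V (Suc j)} \<subseteq> span {0}" by (rule span_mono)
    moreover have "span {br x y | x y. x \<in> V 1 \<and> y \<in> V (Suc j)} = V (Suc (Suc j))"
      using strat[of 1 "Suc j"] by simp
    ultimately show ?case by simp
  qed
  have "(\<Union>i\<in>{1..s}. V i) \<subseteq> {0}"
  proof
    fix x assume "x \<in> (\<Union>i\<in>{1..s}. V i)"
    then obtain i where "i \<in> {1..s}" "x \<in> V i" by blast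
    then show "x \<in> {0}" using zj[of "i - 1"] by auto
  qed
  then have "span (\<Union>i\<in>{1..s}. V i) \<subseteq> span {0}" by (rule span_mono)
  then have U: "(UNIV::'g set) = {0}" using spanV by auto
  obtain b :: 'g where "b \<in> Basis" using nonempty_Basis by blast
  then have b: "b \<noteq> 0" using zero_not_in_Basis by metis
  have "b \<in> {0}" by (subst U[symmetric]) simp
  then show False using b by simp
qed

lemma main1: assumes st: "stratified_lie_algebra br V s"
  shows "\<exists>N. normal_hom_subgroup br V s N \<and> quotient_h_iso_R br V s N"
proof -
  obtain u where u1: "u \<in> V 1" and u0: "u \<noteq> 0" using V1_ne[OF st] by blast
  have n: "normal_hom_subgroup br V s {x. phi u x = 0}" by (rule ker_normal[OF phi_hom phi_lin])
  have "surj (phi u)"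
  proof (rule surjI)
    fix c show "phi u (c *\<^sub>R u) = c" by (rule phi_u[OF u1 u0])
  qed
  then have "quotient_h_iso_R br V s {x. phi u x = 0}"
    unfolding quotient_h_iso_R_def using phi_hom[of u] by (intro exI[of _ "phi u"]) simp
  then show ?thesis using n by blast
qed

lemma main3: assumes st: "stratified_lie_algebra br V s"
  shows "\<exists>H. hom_subgroup br V s H \<and> subgroup_h_iso_R br V s H"
proof -
  obtain u where u1: "u \<in> V 1" and u0: "u \<noteq> 0" using V1_ne[OF st] by blast
  show ?thesis using line_hom[OF u1] line_iso[OF u1 u0] by blast
qed

lemma main2: assumes "normal_hom_subgroup br V s N \<and> quotient_h_iso_R br V s N"
  shows "\<exists>A. hom_subgroup br V s A \<and> complementary br s N A"
proof -
  from assms obtain f where h: "h_hom_to_R br V s f" and sj: "surj f" and N: "{x. f x = 0} = N"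
    unfolding quotient_h_iso_R_def by blast
  obtain v where v1: "v \<in> V 1" and fv: "f v \<noteq> 0" using hom_V1_nonzero[OF h sj] by blast
  have "complementary br s N (range (\<lambda>c. c *\<^sub>R v))"
    unfolding complementary_def
  proof (intro conjI)
    have "g \<in> (\<lambda>(a, b). bch br s a b) ` (N \<times> range (\<lambda>c. c *\<^sub>R v))" for g
    proof -
      define c where "c = f g / f v"
      obtain n where n: "bch br s n (c *\<^sub>R v) = g" using right_trans by blast
      have "f n + c * f v = f g" using hom_add[OF h, of n "c *\<^sub>R v"] hom_line[OF h v1, of c] n by simp
      then have "f n = 0" using fv unfolding c_def by simp
      then have "n \<in> N" using N by blast
      moreover have "c *\<^sub>R v \<in> range (\<lambda>c. c *\<^sub>R v)" by (rule rangeI)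
      ultimately show ?thesis using n by (intro image_eqI[of _ _ "(n, c *\<^sub>R v)"]) auto
    qed
    then show "(\<lambda>(a, b). bch br s a b) ` (N \<times> range (\<lambda>c. c *\<^sub>R v)) = UNIV" by blast
    show "N \<inter> range (\<lambda>c. c *\<^sub>R v) = {0}"
    proof
      show "N \<inter> range (\<lambda>c. c *\<^sub>R v) \<subseteq> {0}"
      proof
        fix x assume x: "x \<in> N \<inter> range (\<lambda>c. c *\<^sub>R v)"
        then obtain c where c: "x = c *\<^sub>R v" by blast
        have "f x = 0" using x N by blast
        then have "c = 0" using hom_line[OF h v1, of c] fv c by simp
        then show "x \<in> {0}" using c by simp
      qed
      have "0 \<in> N" using N hom_zero[OF h] by blast
      moreover have "(0::'g) \<in> range (\<lambda>c. c *\<^sub>R v)" by (rule range_eqI[of _ _ 0]) simp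
      ultimately show "{0} \<subseteq> N \<inter> range (\<lambda>c. c *\<^sub>R v)" by blast
    qed
  qed
  then show "\<exists>A. hom_subgroup br V s A \<and> complementary br s N A" using line_hom[OF v1] by blast
qed

lemma main4: assumes "hom_subgroup br V s H \<and> subgroup_h_iso_R br V s H"
  shows "\<exists>N. normal_hom_subgroup br V s N \<and> complementary br s H N"
proof -
  obtain u where u1: "u \<in> V 1" and u0: "u \<noteq> 0" and H: "H = range (\<lambda>c. c *\<^sub>R u)"
    using psi_line assms by blast
  have "complementary br s H {x. phi u x = 0}"
    unfolding complementary_def
  proof (intro conjI)
    have "g \<in> (\<lambda>(a, b). bch br s a b) ` (H \<times> {x. phi u x = 0})" for g
    proof -
      define c where "c = phi u g"
      obtain n where n: "bch br s (c *\<^sub>R u) n = g" using left_trans by blast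
      have "phi u (c *\<^sub>R u) + phi u n = phi u g" using hom_add[OF phi_hom, of u "c *\<^sub>R u" n] n by simp
      then have "phi u n = 0" using phi_u[OF u1 u0, of c] unfolding c_def by simp
      moreover have "c *\<^sub>R u \<in> H" unfolding H by (rule rangeI)
      ultimately show ?thesis using n by (intro image_eqI[of _ _ "(c *\<^sub>R u, n)"]) auto
    qed
    then show "(\<lambda>(a, b). bch br s a b) ` (H \<times> {x. phi u x = 0}) = UNIV" by blast
    show "H \<inter> {x. phi u x = 0} = {0}"
    proof
      show "H \<inter> {x. phi u x = 0} \<subseteq> {0}"
      proof
        fix x assume x: "x \<in> H \<inter> {x. phi u x = 0}"
        then obtain c where c: "x = c *\<^sub>R u" unfolding H by blast
        have "phi u x = 0" using x by blast
        then have "c = 0" using phi_u[OF u1 u0, of c] c by simp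
        then show "x \<in> {0}" using c by simp
      qed
      have "phi u 0 = 0" by (rule linear_0[OF phi_lin])
      moreover have "(0::'g) \<in> H" unfolding H by (rule range_eqI[of _ _ 0]) simp
      ultimately show "{0} \<subseteq> H \<inter> {x. phi u x = 0}" by blast
    qed
  qed
  then show "\<exists>N. normal_hom_subgroup br V s N \<and> complementary br s H N"
    using ker_normal[OF phi_hom phi_lin] by blast
qed

end

theorem proposition11p14:
  fixes br :: "'g::euclidean_space \<Rightarrow> 'g \<Rightarrow> 'g" and V :: "nat \<Rightarrow> 'g set" and s :: nat
  assumes "stratified_lie_algebra br V s"
  shows "((\<exists>N. normal_hom_subgroup br V s N \<and> quotient_h_iso_R br V s N) \<and>
          (\<forall>N. normal_hom_subgroup br V s N \<and> quotient_h_iso_R br V s N \<longrightarrow>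
               (\<exists>A. hom_subgroup br V s A \<and> complementary br s N A)))
       \<and> ((\<exists>H. hom_subgroup br V s H \<and> subgroup_h_iso_R br V s H) \<and>
          (\<forall>H. hom_subgroup br V s H \<and> subgroup_h_iso_R br V s H \<longrightarrow>
               (\<exists>N. normal_hom_subgroup br V s N \<and> complementary br s H N)))"
proof -
  interpret GL br V s using assms unfolding stratified_lie_algebra_def GL_def by blast
  show ?thesis
    apply (intro conjI allI impI)
       apply (rule main1[OF assms])
      apply (erule main2)
     apply (rule main3[OF assms])
    apply (erule main4)
    done
qed

end
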